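(* Let $T=(\{T_g\}_{g\in G},\{\gamma_{g,h}\}_{g,h\in G},u)$ be an action of a group $G$ on a semigroupal category $\mathcal{C}$ and let $\mathcal{I}$ be an ideal of $\mathcal{C}$. Then (1) $\overline{T_e(\mathcal{I})}=\mathcal{I}$; (2) $\overline{T_g(\overline{T_h(\mathcal{I})})}=\overline{T_{gh}(\mathcal{I})}$ for all $g,h\in G$.
   Context: A semigroupal category is a (strict) category with a tensor product functor and associator satisfying the pentagon axiom. An action of a group $G$ (with unit $e$) on $\mathcal{C}$ is a monoidal functor from $G$ (viewed as a discrete monoidal category) to the monoidal category of semigroupal auto-equivalences of $\mathcal{C}$; concretely, a triple consisting of semigroupal auto-equivalences $T_g$ of $\mathcal{C}$, natural isomorphisms of semigroupal functors $\gamma_{g,h}\colon T_gT_h\Rightarrow T_{gh}$ and $u\colon\mathrm{Id}_{\mathcal{C}}\Rightarrow T_e$, such that $(\gamma_{gh,k})_X\circ(\gamma_{g,h})_{T_k(X)}=(\gamma_{g,hk})_X\circ T_g((\gamma_{h,k})_X)$ for all $g,h,k$ and $X$, and such that $u_{T_g(X)}$ and $(\gamma_{e,g})_X$ are mutually inverse, as are $T_g(u_X)$ and $(\gamma_{g,e})_X$. For a subcategory $\mathcal{D}$, $\overline{\mathcal{D}}$ denotes its isomorphism closure: the smallest subcategory of $\mathcal{C}$ containing $\mathcal{D}$ and closed under isomorphisms (for each object $X$ in it and each isomorphism $\varphi\colon X\to X'$ in $\mathcal{C}$, $X'$ and $\varphi$ are in it). An ideal of $\mathcal{C}$ is a subcategory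 closed under isomorphisms such that $X\otimes Y$ and $Y\otimes X$ are objects of it whenever $X$ is an object of it and $Y$ is any object of $\mathcal{C}$. For a functor $T_g$ and subcategory $\mathcal{I}$, $T_g(\mathcal{I})$ denotes the image subcategory. *)

theory Defs
  imports "HOL-Algebra.Group"
begin

record ('o, 'm) scat =
  Ob   :: "'o set"
  Ar   :: "'m set"
  dm   :: "'m \<Rightarrow> 'o"
  cd   :: "'m \<Rightarrow> 'o"
  idt  :: "'o \<Rightarrow> 'm"
  cmp  :: "'m \<Rightarrow> 'm \<Rightarrow> 'm"   (* cmp C g f = g \<circ> f *)
  tno  :: "'o \<Rightarrow> 'o \<Rightarrow> 'o"
  tna  :: "'m \<Rightarrow> 'm \<Rightarrow> 'm"
  asc  :: "'o \<Rightarrow> 'o \<Rightarrow> 'o \<Rightarrow> 'm"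

definition hom :: "('o,'m,'x) scat_scheme \<Rightarrow> 'o \<Rightarrow> 'o \<Rightarrow> 'm set" where
  "hom C X Y = {f \<in> Ar C. dm C f = X \<and> cd C f = Y}"

definition is_category :: "('o,'m,'x) scat_scheme \<Rightarrow> bool" where
  "is_category C \<longleftrightarrow>
     (\<forall>f\<in>Ar C. dm C f \<in> Ob C \<and> cd C f \<in> Ob C) \<and>
     (\<forall>X\<in>Ob C. idt C X \<in> hom C X X) \<and>
     (\<forall>f\<in>Ar C. \<forall>g\<in>Ar C. cd C f = dm C g \<longrightarrow> cmp C g f \<in> hom C (dm C f) (cd C g)) \<and>
     (\<forall>f\<in>Ar C. cmp C f (idt C (dm C f)) = f \<and> cmp C (idt C (cd C f)) f = f) \<and>
     (\<forall>f\<in>Ar C. \<forall>g\<in>Ar C. \<forall>h\<in>Ar C. cd C f = dm C g \<longrightarrow> cd C g = dm C h \<longrightarrow>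
        cmp C h (cmp C g f) = cmp C (cmp C h g) f)"

definition iso :: "('o,'m,'x) scat_scheme \<Rightarrow> 'm \<Rightarrow> bool" where
  "iso C f \<longleftrightarrow> f \<in> Ar C \<and>
     (\<exists>g \<in> hom C (cd C f) (dm C f).
        cmp C g f = idt C (dm C f) \<and> cmp C f g = idt C (cd C f))"

definition is_tensor :: "('o,'m,'x) scat_scheme \<Rightarrow> bool" where
  "is_tensor C \<longleftrightarrow>
     (\<forall>X\<in>Ob C. \<forall>Y\<in>Ob C. tno C X Y \<in> Ob C) \<and>
     (\<forall>f\<in>Ar C. \<forall>g\<in>Ar C. tna C f g \<in> hom C (tno C (dm C f) (dm C g)) (tno C (cd C f) (cd C g))) \<and>
     (\<forall>X\<in>Ob C. \<forall>Y\<in>Ob C. tna C (idt C X) (idt C Y) = idt C (tno C X Y)) \<and>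
     (\<forall>f\<in>Ar C. \<forall>f'\<in>Ar C. \<forall>g\<in>Ar C. \<forall>g'\<in>Ar C. cd C f = dm C f' \<longrightarrow> cd C g = dm C g' \<longrightarrow>
        tna C (cmp C f' f) (cmp C g' g) = cmp C (tna C f' g') (tna C f g))"

definition semigroupal_category :: "('o,'m,'x) scat_scheme \<Rightarrow> bool" where
  "semigroupal_category C \<longleftrightarrow> is_category C \<and> is_tensor C \<and>
     (\<forall>X\<in>Ob C. \<forall>Y\<in>Ob C. \<forall>Z\<in>Ob C.
        asc C X Y Z \<in> hom C (tno C (tno C X Y) Z) (tno C X (tno C Y Z)) \<and> iso C (asc C X Y Z)) \<and>
     (\<forall>f\<in>Ar C. \<forall>g\<in>Ar C. \<forall>h\<in>Ar C.
        cmp C (asc C (cd C f) (cd C g) (cd C h)) (tna C (tna C f g) h)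
        = cmp C (tna C f (tna C g h)) (asc C (dm C f) (dm C g) (dm C h))) \<and>
     (\<forall>W\<in>Ob C. \<forall>X\<in>Ob C. \<forall>Y\<in>Ob C. \<forall>Z\<in>Ob C.
        cmp C (asc C W X (tno C Y Z)) (asc C (tno C W X) Y Z)
        = cmp C (tna C (idt C W) (asc C X Y Z))
            (cmp C (asc C W (tno C X Y) Z) (tna C (asc C W X Y) (idt C Z))))"

text \<open>A functor is given by its object and morphism maps (only their values on the
 carriers matter).\<close>

definition is_functor :: "('o,'m,'x) scat_scheme \<Rightarrow> ('p,'n,'y) scat_scheme \<Rightarrow>
    ('o \<Rightarrow> 'p) \<Rightarrow> ('m \<Rightarrow> 'n) \<Rightarrow> bool" where
  "is_functor C D Fo Fa \<longleftrightarrow>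
     (\<forall>X\<in>Ob C. Fo X \<in> Ob D) \<and>
     (\<forall>f\<in>Ar C. Fa f \<in> hom D (Fo (dm C f)) (Fo (cd C f))) \<and>
     (\<forall>X\<in>Ob C. Fa (idt C X) = idt D (Fo X)) \<and>
     (\<forall>f\<in>Ar C. \<forall>g\<in>Ar C. cd C f = dm C g \<longrightarrow> Fa (cmp C g f) = cmp D (Fa g) (Fa f))"

definition nat_iso :: "('o,'m,'x) scat_scheme \<Rightarrow> ('p,'n,'y) scat_scheme \<Rightarrow>
    ('o \<Rightarrow> 'p) \<Rightarrow> ('m \<Rightarrow> 'n) \<Rightarrow> ('o \<Rightarrow> 'p) \<Rightarrow> ('m \<Rightarrow> 'n) \<Rightarrow> ('o \<Rightarrow> 'n) \<Rightarrow> bool" where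
  "nat_iso C D Fo Fa Go Ga \<eta> \<longleftrightarrow>
     (\<forall>X\<in>Ob C. \<eta> X \<in> hom D (Fo X) (Go X) \<and> iso D (\<eta> X)) \<and>
     (\<forall>f\<in>Ar C. cmp D (\<eta> (cd C f)) (Fa f) = cmp D (Ga f) (\<eta> (dm C f)))"

definition is_equivalence :: "('o,'m,'x) scat_scheme \<Rightarrow> ('p,'n,'y) scat_scheme \<Rightarrow>
    ('o \<Rightarrow> 'p) \<Rightarrow> ('m \<Rightarrow> 'n) \<Rightarrow> bool" where
  "is_equivalence C D Fo Fa \<longleftrightarrow> is_functor C D Fo Fa \<and>
     (\<exists>Go Ga \<eta> \<epsilon>. is_functor D C Go Ga \<and>
        nat_iso C C id id (Go \<circ> Fo) (Ga \<circ> Fa) \<eta> \<and>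
        nat_iso D D (Fo \<circ> Go) (Fa \<circ> Ga) id id \<epsilon>)"

text \<open>A semigroupal endofunctor: object map, morphism map, and structure isomorphisms
 J X Y : F X \<otimes> F Y \<rightarrow> F (X \<otimes> Y).\<close>

type_synonym ('o,'m) sgfun = "('o \<Rightarrow> 'o) \<times> ('m \<Rightarrow> 'm) \<times> ('o \<Rightarrow> 'o \<Rightarrow> 'm)"

definition fo :: "('o,'m) sgfun \<Rightarrow> 'o \<Rightarrow> 'o" where "fo F = fst F"
definition fa :: "('o,'m) sgfun \<Rightarrow> 'm \<Rightarrow> 'm" where "fa F = fst (snd F)"
definition fj :: "('o,'m) sgfun \<Rightarrow> 'o \<Rightarrow> 'o \<Rightarrow> 'm" where "fj F = snd (snd F)"

definition semigroupal_functor :: "('o,'m,'x) scat_scheme \<Rightarrow> ('o,'m) sgfun \<Rightarrow> bool" where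
  "semigroupal_functor C F \<longleftrightarrow> is_functor C C (fo F) (fa F) \<and>
     (\<forall>X\<in>Ob C. \<forall>Y\<in>Ob C. fj F X Y \<in> hom C (tno C (fo F X) (fo F Y)) (fo F (tno C X Y))
                          \<and> iso C (fj F X Y)) \<and>
     (\<forall>f\<in>Ar C. \<forall>g\<in>Ar C.
        cmp C (fj F (cd C f) (cd C g)) (tna C (fa F f) (fa F g))
        = cmp C (fa F (tna C f g)) (fj F (dm C f) (dm C g))) \<and>
     (\<forall>X\<in>Ob C. \<forall>Y\<in>Ob C. \<forall>Z\<in>Ob C.
        cmp C (fa F (asc C X Y Z)) (cmp C (fj F (tno C X Y) Z) (tna C (fj F X Y) (idt C (fo F Z))))
        = cmp C (fj F X (tno C Y Z)) (cmp C (tna C (idt C (fo F X)) (fj F Y Z)) (asc C (fo F X) (fo F Y) (fo F Z))))"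

definition semigroupal_autoequivalence :: "('o,'m,'x) scat_scheme \<Rightarrow> ('o,'m) sgfun \<Rightarrow> bool" where
  "semigroupal_autoequivalence C F \<longleftrightarrow>
     semigroupal_functor C F \<and> is_equivalence C C (fo F) (fa F)"

definition sg_nat_iso :: "('o,'m,'x) scat_scheme \<Rightarrow> ('o,'m) sgfun \<Rightarrow> ('o,'m) sgfun \<Rightarrow> ('o \<Rightarrow> 'm) \<Rightarrow> bool" where
  "sg_nat_iso C F G \<eta> \<longleftrightarrow> nat_iso C C (fo F) (fa F) (fo G) (fa G) \<eta> \<and>
     (\<forall>X\<in>Ob C. \<forall>Y\<in>Ob C.
        cmp C (\<eta> (tno C X Y)) (fj F X Y) = cmp C (fj G X Y) (tna C (\<eta> X) (\<eta> Y)))"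

definition sg_id :: "('o,'m,'x) scat_scheme \<Rightarrow> ('o,'m) sgfun" where
  "sg_id C = (id, id, \<lambda>X Y. idt C (tno C X Y))"

definition sg_comp :: "('o,'m,'x) scat_scheme \<Rightarrow> ('o,'m) sgfun \<Rightarrow> ('o,'m) sgfun \<Rightarrow> ('o,'m) sgfun" where
  "sg_comp C F G = (fo F \<circ> fo G, fa F \<circ> fa G,
     \<lambda>X Y. cmp C (fa F (fj G X Y)) (fj F (fo G X) (fo G Y)))"

definition group_action_on ::
  "('g,'b) monoid_scheme \<Rightarrow> ('o,'m,'x) scat_scheme \<Rightarrow> ('g \<Rightarrow> ('o,'m) sgfun) \<Rightarrow>
   ('g \<Rightarrow> 'g \<Rightarrow> 'o \<Rightarrow> 'm) \<Rightarrow> ('o \<Rightarrow> 'm) \<Rightarrow> bool" where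
  "group_action_on G C T \<gamma> u \<longleftrightarrow>
     (\<forall>g\<in>carrier G. semigroupal_autoequivalence C (T g)) \<and>
     (\<forall>g\<in>carrier G. \<forall>h\<in>carrier G.
        sg_nat_iso C (sg_comp C (T g) (T h)) (T (g \<otimes>\<^bsub>G\<^esub> h)) (\<gamma> g h)) \<and>
     sg_nat_iso C (sg_id C) (T \<one>\<^bsub>G\<^esub>) u \<and>
     (\<forall>g\<in>carrier G. \<forall>h\<in>carrier G. \<forall>k\<in>carrier G. \<forall>X\<in>Ob C.
        cmp C (\<gamma> (g \<otimes>\<^bsub>G\<^esub> h) k X) (\<gamma> g h (fo (T k) X))
        = cmp C (\<gamma> g (h \<otimes>\<^bsub>G\<^esub> k) X) (fa (T g) (\<gamma> h k X))) \<and>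
     (\<forall>g\<in>carrier G. \<forall>X\<in>Ob C.
        cmp C (\<gamma> \<one>\<^bsub>G\<^esub> g X) (u (fo (T g) X)) = idt C (fo (T g) X) \<and>
        cmp C (u (fo (T g) X)) (\<gamma> \<one>\<^bsub>G\<^esub> g X) = idt C (fo (T \<one>\<^bsub>G\<^esub>) (fo (T g) X))) \<and>
     (\<forall>g\<in>carrier G. \<forall>X\<in>Ob C.
        cmp C (\<gamma> g \<one>\<^bsub>G\<^esub> X) (fa (T g) (u X)) = idt C (fo (T g) X) \<and>
        cmp C (fa (T g) (u X)) (\<gamma> g \<one>\<^bsub>G\<^esub> X) = idt C (fo (T g) (fo (T \<one>\<^bsub>G\<^esub>) X)))"

text \<open>A subcategory (or just a collection of objects and morphisms) is a pair
 (set of objects, set of morphisms).\<close>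

definition subcategory :: "('o,'m,'x) scat_scheme \<Rightarrow> 'o set \<times> 'm set \<Rightarrow> bool" where
  "subcategory C D \<longleftrightarrow> fst D \<subseteq> Ob C \<and> snd D \<subseteq> Ar C \<and>
     (\<forall>f\<in>snd D. dm C f \<in> fst D \<and> cd C f \<in> fst D) \<and>
     (\<forall>X\<in>fst D. idt C X \<in> snd D) \<and>
     (\<forall>f\<in>snd D. \<forall>g\<in>snd D. cd C f = dm C g \<longrightarrow> cmp C g f \<in> snd D)"

definition iso_closed :: "('o,'m,'x) scat_scheme \<Rightarrow> 'o set \<times> 'm set \<Rightarrow> bool" where
  "iso_closed C D \<longleftrightarrow>
     (\<forall>X\<in>fst D. \<forall>\<phi>. iso C \<phi> \<and> dm C \<phi> = X \<longrightarrow> cd C \<phi> \<in> fst D \<and> \<phi> \<in> snd D)"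

definition iso_closure :: "('o,'m,'x) scat_scheme \<Rightarrow> 'o set \<times> 'm set \<Rightarrow> 'o set \<times> 'm set" where
  "iso_closure C D =
     (let S = {E. subcategory C E \<and> fst D \<subseteq> fst E \<and> snd D \<subseteq> snd E \<and> iso_closed C E}
      in (\<Inter>(fst ` S), \<Inter>(snd ` S)))"

definition is_ideal :: "('o,'m,'x) scat_scheme \<Rightarrow> 'o set \<times> 'm set \<Rightarrow> bool" where
  "is_ideal C I \<longleftrightarrow> subcategory C I \<and> iso_closed C I \<and>
     (\<forall>X\<in>fst I. \<forall>Y\<in>Ob C. tno C X Y \<in> fst I \<and> tno C Y X \<in> fst I)"

definition image_sub :: "('o,'m) sgfun \<Rightarrow> 'o set \<times> 'm set \<Rightarrow> 'o set \<times> 'm set" where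
  "image_sub F D = (fo F ` fst D, fa F ` snd D)"

end

theory Submission
  imports Defs
begin

lemma hom_iff: "f \<in> Defs.hom C X Y \<longleftrightarrow> f \<in> Ar C \<and> dm C f = X \<and> cd C f = Y"
  by (simp add: Defs.hom_def)

lemma cat_dom: "is_category C \<Longrightarrow> f \<in> Ar C \<Longrightarrow> dm C f \<in> Ob C \<and> cd C f \<in> Ob C"
  by (simp add: is_category_def)
lemma cat_id: "is_category C \<Longrightarrow> X \<in> Ob C \<Longrightarrow> idt C X \<in> Ar C \<and> dm C (idt C X) = X \<and> cd C (idt C X) = X"
  by (simp add: is_category_def hom_iff)
lemma cat_comp: "is_category C \<Longrightarrow> f \<in> Ar C \<Longrightarrow> g \<in> Ar C \<Longrightarrow> cd C f = dm C g \<Longrightarrow>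
   cmp C g f \<in> Ar C \<and> dm C (cmp C g f) = dm C f \<and> cd C (cmp C g f) = cd C g"
  unfolding is_category_def hom_iff by blast
lemma cat_idr: "is_category C \<Longrightarrow> f \<in> Ar C \<Longrightarrow> cmp C f (idt C (dm C f)) = f"
  by (simp add: is_category_def)
lemma cat_idl: "is_category C \<Longrightarrow> f \<in> Ar C \<Longrightarrow> cmp C (idt C (cd C f)) f = f"
  by (simp add: is_category_def)
lemma cat_assoc: "is_category C \<Longrightarrow> f \<in> Ar C \<Longrightarrow> g \<in> Ar C \<Longrightarrow> h \<in> Ar C \<Longrightarrow>
   cd C f = dm C g \<Longrightarrow> cd C g = dm C h \<Longrightarrow> cmp C h (cmp C g f) = cmp C (cmp C h g) f"
  unfolding is_category_def by blast

lemma fun_ob: "is_functor C D Fo Fa \<Longrightarrow> X \<in> Ob C \<Longrightarrow> Fo X \<in> Ob D"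
  by (simp add: is_functor_def)
lemma fun_ar: "is_functor C D Fo Fa \<Longrightarrow> f \<in> Ar C \<Longrightarrow>
   Fa f \<in> Ar D \<and> dm D (Fa f) = Fo (dm C f) \<and> cd D (Fa f) = Fo (cd C f)"
  by (simp add: is_functor_def hom_iff)
lemma fun_id: "is_functor C D Fo Fa \<Longrightarrow> X \<in> Ob C \<Longrightarrow> Fa (idt C X) = idt D (Fo X)"
  by (simp add: is_functor_def)
lemma fun_comp: "is_functor C D Fo Fa \<Longrightarrow> f \<in> Ar C \<Longrightarrow> g \<in> Ar C \<Longrightarrow> cd C f = dm C g \<Longrightarrow>
   Fa (cmp C g f) = cmp D (Fa g) (Fa f)"
  by (simp add: is_functor_def)

lemma id_functor: "is_category C \<Longrightarrow> is_functor C C id id"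
  unfolding is_functor_def by (auto simp: is_category_def Defs.hom_def)

lemma comp_functor: "is_category C \<Longrightarrow> is_functor C C Fo Fa \<Longrightarrow> is_functor C C Go Ga \<Longrightarrow>
   is_functor C C (Fo \<circ> Go) (Fa \<circ> Ga)"
  unfolding is_functor_def[of C C "Fo \<circ> Go"] hom_iff
  by (auto simp: fun_ob fun_ar fun_id fun_comp hom_iff)

lemma iso_inv:
  assumes "is_category C" "iso C \<phi>"
  shows "\<exists>\<psi>. \<psi> \<in> Ar C \<and> dm C \<psi> = cd C \<phi> \<and> cd C \<psi> = dm C \<phi> \<and> iso C \<psi> \<and>
     cmp C \<psi> \<phi> = idt C (dm C \<phi>) \<and> cmp C \<phi> \<psi> = idt C (cd C \<phi>)"
proof -
  from assms(2) obtain \<psi> where p: "\<psi> \<in> hom C (cd C \<phi>) (dm C \<phi>)"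
     "cmp C \<psi> \<phi> = idt C (dm C \<phi>)" "cmp C \<phi> \<psi> = idt C (cd C \<phi>)" and a: "\<phi> \<in> Ar C"
    unfolding iso_def by blast
  have "iso C \<psi>" unfolding iso_def using p a by (auto simp: Defs.hom_def)
  then show ?thesis using p by (auto simp: hom_iff)
qed

lemma functor_iso:
  assumes "is_category C" "is_functor C C Fo Fa" "iso C \<phi>"
  shows "iso C (Fa \<phi>)"
proof -
  obtain \<psi> where p: "\<psi> \<in> Ar C" "dm C \<psi> = cd C \<phi>" "cd C \<psi> = dm C \<phi>"
     "cmp C \<psi> \<phi> = idt C (dm C \<phi>)" "cmp C \<phi> \<psi> = idt C (cd C \<phi>)"
    using iso_inv[OF assms(1,3)] by blast
  have a: "\<phi> \<in> Ar C" using assms(3) by (simp add: iso_def)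
  have "cmp C (Fa \<psi>) (Fa \<phi>) = Fa (idt C (dm C \<phi>))"
    using fun_comp[OF assms(2) a p(1)] p by simp
  also have "\<dots> = idt C (dm C (Fa \<phi>))"
    using fun_id[OF assms(2)] cat_dom[OF assms(1) a] fun_ar[OF assms(2) a] by simp
  finally have 1: "cmp C (Fa \<psi>) (Fa \<phi>) = idt C (dm C (Fa \<phi>))" .
  have "cmp C (Fa \<phi>) (Fa \<psi>) = Fa (idt C (cd C \<phi>))"
    using fun_comp[OF assms(2) p(1) a] p by simp
  also have "\<dots> = idt C (cd C (Fa \<phi>))"
    using fun_id[OF assms(2)] cat_dom[OF assms(1) a] fun_ar[OF assms(2) a] by simp
  finally have 2: "cmp C (Fa \<phi>) (Fa \<psi>) = idt C (cd C (Fa \<phi>))" .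
  show ?thesis unfolding iso_def
    using 1 2 fun_ar[OF assms(2) a] fun_ar[OF assms(2) p(1)] p by (auto simp: Defs.hom_def)
qed

lemma sub_dm: "subcategory C K \<Longrightarrow> f \<in> snd K \<Longrightarrow> dm C f \<in> fst K \<and> cd C f \<in> fst K"
  by (simp add: subcategory_def)
lemma sub_comp: "subcategory C K \<Longrightarrow> f \<in> snd K \<Longrightarrow> g \<in> snd K \<Longrightarrow> cd C f = dm C g \<Longrightarrow> cmp C g f \<in> snd K"
  by (simp add: subcategory_def)
lemma isoc: "iso_closed C K \<Longrightarrow> X \<in> fst K \<Longrightarrow> iso C \<phi> \<Longrightarrow> dm C \<phi> = X \<Longrightarrow> cd C \<phi> \<in> fst K \<and> \<phi> \<in> snd K"
  by (simp add: iso_closed_def)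

locale transfer_setup =
  fixes C K Fo Fa Go Ga \<eta>
  assumes cat: "is_category C" and sub: "subcategory C K" and ic: "iso_closed C K"
    and F: "is_functor C C Fo Fa" and G: "is_functor C C Go Ga"
    and N: "nat_iso C C Fo Fa Go Ga \<eta>"
begin

lemma eta: "X \<in> Ob C \<Longrightarrow> \<eta> X \<in> Ar C \<and> dm C (\<eta> X) = Fo X \<and> cd C (\<eta> X) = Go X \<and> iso C (\<eta> X)"
  using N by (simp add: nat_iso_def hom_iff)
lemma nat: "f \<in> Ar C \<Longrightarrow> cmp C (\<eta> (cd C f)) (Fa f) = cmp C (Ga f) (\<eta> (dm C f))"
  using N by (simp add: nat_iso_def)

lemma fwd_ob: "X \<in> Ob C \<Longrightarrow> Fo X \<in> fst K \<Longrightarrow> Go X \<in> fst K"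
  using eta isoc[OF ic] by metis

lemma bwd_ob: "X \<in> Ob C \<Longrightarrow> Go X \<in> fst K \<Longrightarrow> Fo X \<in> fst K"
proof -
  assume X: "X \<in> Ob C" "Go X \<in> fst K"
  obtain \<psi> where "\<psi> \<in> Ar C" "dm C \<psi> = Go X" "cd C \<psi> = Fo X" "iso C \<psi>"
    using iso_inv[OF cat] eta[OF X(1)] by metis
  then show ?thesis using isoc[OF ic X(2)] by metis
qed

lemma fwd_ar:
  assumes f: "f \<in> Ar C" and K: "Fa f \<in> snd K"
  shows "Ga f \<in> snd K"
proof -
  have o: "dm C f \<in> Ob C" "cd C f \<in> Ob C" using cat_dom[OF cat f] by auto
  have Ff: "Fa f \<in> Ar C" "dm C (Fa f) = Fo (dm C f)" "cd C (Fa f) = Fo (cd C f)"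
    using fun_ar[OF F f] by auto
  have Gf: "Ga f \<in> Ar C" "dm C (Ga f) = Go (dm C f)" "cd C (Ga f) = Go (cd C f)"
    using fun_ar[OF G f] by auto
  have k1: "Fo (dm C f) \<in> fst K" "Fo (cd C f) \<in> fst K" using sub_dm[OF sub K] Ff by auto
  have k2: "Go (dm C f) \<in> fst K" using fwd_ob o k1 by auto
  define a where "a = \<eta> (dm C f)"
  define b where "b = \<eta> (cd C f)"
  have a: "a \<in> Ar C" "dm C a = Fo (dm C f)" "cd C a = Go (dm C f)" "iso C a"
    using eta[OF o(1)] a_def by auto
  have b: "b \<in> Ar C" "dm C b = Fo (cd C f)" "cd C b = Go (cd C f)" "iso C b"
    using eta[OF o(2)] b_def by auto
  obtain a' where a': "a' \<in> Ar C" "dm C a' = Go (dm C f)" "cd C a' = Fo (dm C f)" "iso C a'"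
     "cmp C a a' = idt C (Go (dm C f))"
    using iso_inv[OF cat a(4)] a by metis
  have a'K: "a' \<in> snd K" using isoc[OF ic k2 a'(4) a'(2)] by simp
  have bK: "b \<in> snd K" using isoc[OF ic k1(2) b(4) b(2)] by simp
  have c1: "cmp C (Fa f) a' \<in> snd K" using sub_comp[OF sub a'K K] a' Ff by simp
  have c2: "cmp C b (cmp C (Fa f) a') \<in> snd K"
    using sub_comp[OF sub c1 bK] cat_comp[OF cat a'(1) Ff(1)] a' Ff b by simp
  have "cmp C b (cmp C (Fa f) a') = cmp C (cmp C b (Fa f)) a'"
    using cat_assoc[OF cat a'(1) Ff(1) b(1)] a' Ff b by simp
  also have "\<dots> = cmp C (cmp C (Ga f) a) a'" using nat[OF f] a_def b_def by simp
  also have "\<dots> = cmp C (Ga f) (cmp C a a')"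
    using cat_assoc[OF cat a'(1) a(1) Gf(1)] a' a Gf by simp
  also have "\<dots> = Ga f" using a'(5) Gf cat_idr[OF cat Gf(1)] by simp
  finally show ?thesis using c2 by simp
qed

lemma bwd_ar:
  assumes f: "f \<in> Ar C" and K: "Ga f \<in> snd K"
  shows "Fa f \<in> snd K"
proof -
  have o: "dm C f \<in> Ob C" "cd C f \<in> Ob C" using cat_dom[OF cat f] by auto
  have Ff: "Fa f \<in> Ar C" "dm C (Fa f) = Fo (dm C f)" "cd C (Fa f) = Fo (cd C f)"
    using fun_ar[OF F f] by auto
  have Gf: "Ga f \<in> Ar C" "dm C (Ga f) = Go (dm C f)" "cd C (Ga f) = Go (cd C f)"
    using fun_ar[OF G f] by auto
  have k1: "Go (dm C f) \<in> fst K" "Go (cd C f) \<in> fst K" using sub_dm[OF sub K] Gf by auto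
  have k2: "Fo (dm C f) \<in> fst K" using bwd_ob o k1 by auto
  define a where "a = \<eta> (dm C f)"
  define b where "b = \<eta> (cd C f)"
  have a: "a \<in> Ar C" "dm C a = Fo (dm C f)" "cd C a = Go (dm C f)" "iso C a"
    using eta[OF o(1)] a_def by auto
  have b: "b \<in> Ar C" "dm C b = Fo (cd C f)" "cd C b = Go (cd C f)" "iso C b"
    using eta[OF o(2)] b_def by auto
  obtain b' where b': "b' \<in> Ar C" "dm C b' = Go (cd C f)" "cd C b' = Fo (cd C f)" "iso C b'"
     "cmp C b' b = idt C (Fo (cd C f))"
    using iso_inv[OF cat b(4)] b by metis
  have b'K: "b' \<in> snd K" using isoc[OF ic k1(2) b'(4) b'(2)] by simp
  have aK: "a \<in> snd K" using isoc[OF ic k2 a(4) a(2)] by simp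
  have c1: "cmp C (Ga f) a \<in> snd K" using sub_comp[OF sub aK K] a Gf by simp
  have c2: "cmp C b' (cmp C (Ga f) a) \<in> snd K"
    using sub_comp[OF sub c1 b'K] cat_comp[OF cat a(1) Gf(1)] a Gf b' by simp
  have "cmp C b' (cmp C (Ga f) a) = cmp C b' (cmp C b (Fa f))" using nat[OF f] a_def b_def by simp
  also have "\<dots> = cmp C (cmp C b' b) (Fa f)"
    using cat_assoc[OF cat Ff(1) b(1) b'(1)] b' Ff b by simp
  also have "\<dots> = Fa f" using b'(5) Ff cat_idl[OF cat Ff(1)] by simp
  finally show ?thesis using c2 by simp
qed

end


lemma full_S:
  assumes "is_category C"
  shows "subcategory C (Ob C, Ar C) \<and> iso_closed C (Ob C, Ar C)"
  using assms unfolding subcategory_def iso_closed_def iso_def is_category_def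
  by (auto simp: Defs.hom_def)

lemma cl_min:
  assumes "subcategory C E" "fst D \<subseteq> fst E" "snd D \<subseteq> snd E" "iso_closed C E"
  shows "fst (iso_closure C D) \<subseteq> fst E \<and> snd (iso_closure C D) \<subseteq> snd E"
  using assms unfolding iso_closure_def Let_def by auto

lemma cl_prop:
  assumes cat: "is_category C" and D: "fst D \<subseteq> Ob C" "snd D \<subseteq> Ar C"
  defines "K \<equiv> iso_closure C D"
  shows "subcategory C K \<and> fst D \<subseteq> fst K \<and> snd D \<subseteq> snd K \<and> iso_closed C K"
proof -
  define S where "S = {E. subcategory C E \<and> fst D \<subseteq> fst E \<and> snd D \<subseteq> snd E \<and> iso_closed C E}"
  have K: "K = (\<Inter>(fst ` S), \<Inter>(snd ` S))" unfolding K_def iso_closure_def S_def Let_def by simp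
  have full: "(Ob C, Ar C) \<in> S" using full_S[OF cat] D unfolding S_def by auto
  have fK: "\<And>X. X \<in> fst K \<longleftrightarrow> (\<forall>E\<in>S. X \<in> fst E)" using K by auto
  have sK: "\<And>f. f \<in> snd K \<longleftrightarrow> (\<forall>E\<in>S. f \<in> snd E)" using K by auto
  have ES: "\<And>E. E \<in> S \<Longrightarrow> subcategory C E \<and> fst D \<subseteq> fst E \<and> snd D \<subseteq> snd E \<and> iso_closed C E"
    unfolding S_def by simp
  have s1: "fst K \<subseteq> Ob C" using full fK by fastforce
  have s2: "snd K \<subseteq> Ar C" using full sK by fastforce
  have s3: "\<forall>f\<in>snd K. dm C f \<in> fst K \<and> cd C f \<in> fst K"
    using ES fK sK unfolding subcategory_def by meson
  have s4: "\<forall>X\<in>fst K. idt C X \<in> snd K"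
    using ES fK sK unfolding subcategory_def by meson
  have s5: "\<forall>f\<in>snd K. \<forall>g\<in>snd K. cd C f = dm C g \<longrightarrow> cmp C g f \<in> snd K"
    using ES fK sK unfolding subcategory_def by meson
  have s6: "iso_closed C K"
    using ES fK sK unfolding iso_closed_def by meson
  have s7: "fst D \<subseteq> fst K" "snd D \<subseteq> snd K" using ES fK sK by blast+
  show ?thesis using s1 s2 s3 s4 s5 s6 s7 unfolding subcategory_def by blast
qed

lemma image_in:
  assumes "is_functor C C Fo Fa" "subcategory C D"
  shows "fst (image_sub (Fo, Fa, J) D) \<subseteq> Ob C" "snd (image_sub (Fo, Fa, J) D) \<subseteq> Ar C"
  using assms unfolding image_sub_def fo_def fa_def subcategory_def
  by (auto simp: fun_ob fun_ar)

lemma image_in':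
  assumes "is_functor C C (fo F) (fa F)" "subcategory C D"
  shows "fst (image_sub F D) \<subseteq> Ob C \<and> snd (image_sub F D) \<subseteq> Ar C"
  using assms unfolding image_sub_def subcategory_def
  by (auto simp: fun_ob fun_ar)

theorem lemma2p19:
  fixes G :: "('g, 'b) monoid_scheme"
    and C :: "('o, 'm, 'x) scat_scheme"
    and T :: "'g \<Rightarrow> ('o, 'm) sgfun"
    and \<gamma> :: "'g \<Rightarrow> 'g \<Rightarrow> 'o \<Rightarrow> 'm"
    and u :: "'o \<Rightarrow> 'm"
    and I :: "'o set \<times> 'm set"
  assumes "group G"
    and "semigroupal_category C"
    and "group_action_on G C T \<gamma> u"
    and "is_ideal C I"
  shows "iso_closure C (image_sub (T \<one>\<^bsub>G\<^esub>) I) = I \<and>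
         (\<forall>g\<in>carrier G. \<forall>h\<in>carrier G.
           iso_closure C (image_sub (T g) (iso_closure C (image_sub (T h) I)))
           = iso_closure C (image_sub (T (g \<otimes>\<^bsub>G\<^esub> h)) I))"
proof -
  have cat: "is_category C" using assms(2) by (simp add: semigroupal_category_def)
  have A: "group_action_on G C T \<gamma> u" by fact
  have one: "\<one>\<^bsub>G\<^esub> \<in> carrier G" using assms(1) by (simp add: group.is_monoid monoid.one_closed)
  have mc: "\<And>g h. g \<in> carrier G \<Longrightarrow> h \<in> carrier G \<Longrightarrow> g \<otimes>\<^bsub>G\<^esub> h \<in> carrier G"
    using assms(1) by (simp add: group.is_monoid monoid.m_closed)
  have Tf: "\<And>g. g \<in> carrier G \<Longrightarrow> is_functor C C (fo (T g)) (fa (T g))"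
    using A unfolding group_action_on_def semigroupal_autoequivalence_def semigroupal_functor_def
    by blast
  have Tu: "nat_iso C C id id (fo (T \<one>\<^bsub>G\<^esub>)) (fa (T \<one>\<^bsub>G\<^esub>)) u"
    using A unfolding group_action_on_def sg_nat_iso_def sg_id_def fo_def fa_def by simp
  have Tg: "\<And>g h. g \<in> carrier G \<Longrightarrow> h \<in> carrier G \<Longrightarrow>
     nat_iso C C (fo (T g) \<circ> fo (T h)) (fa (T g) \<circ> fa (T h)) (fo (T (g \<otimes>\<^bsub>G\<^esub> h))) (fa (T (g \<otimes>\<^bsub>G\<^esub> h))) (\<gamma> g h)"
  proof -
    fix g h assume "g \<in> carrier G" "h \<in> carrier G"
    then have "sg_nat_iso C (sg_comp C (T g) (T h)) (T (g \<otimes>\<^bsub>G\<^esub> h)) (\<gamma> g h)"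
      using A unfolding group_action_on_def by blast
    then show "?thesis g h" unfolding sg_nat_iso_def sg_comp_def by (simp add: fo_def fa_def)
  qed
  have Isub: "subcategory C I" and Iic: "iso_closed C I" using assms(4) by (auto simp: is_ideal_def)
  have Iin: "fst I \<subseteq> Ob C" "snd I \<subseteq> Ar C" using Isub by (auto simp: subcategory_def)
  note idF = id_functor[OF cat]
  define K1 where "K1 = iso_closure C (image_sub (T \<one>\<^bsub>G\<^esub>) I)"
  have im1: "fst (image_sub (T \<one>\<^bsub>G\<^esub>) I) \<subseteq> Ob C \<and> snd (image_sub (T \<one>\<^bsub>G\<^esub>) I) \<subseteq> Ar C"
    using image_in'[OF Tf[OF one] Isub] .
  have K1p: "subcategory C K1 \<and> fst (image_sub (T \<one>\<^bsub>G\<^esub>) I) \<subseteq> fst K1 \<and>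
      snd (image_sub (T \<one>\<^bsub>G\<^esub>) I) \<subseteq> snd K1 \<and> iso_closed C K1"
    unfolding K1_def using cl_prop[OF cat] im1 by blast
  interpret t1: transfer_setup C I id id "fo (T \<one>\<^bsub>G\<^esub>)" "fa (T \<one>\<^bsub>G\<^esub>)" u
    using cat Isub Iic idF Tf[OF one] Tu by unfold_locales
  interpret t2: transfer_setup C K1 id id "fo (T \<one>\<^bsub>G\<^esub>)" "fa (T \<one>\<^bsub>G\<^esub>)" u
    using cat K1p idF Tf[OF one] Tu by unfold_locales auto
  have "fst K1 \<subseteq> fst I \<and> snd K1 \<subseteq> snd I"
    unfolding K1_def
  proof (rule cl_min[OF Isub _ _ Iic])
    show "fst (image_sub (T \<one>\<^bsub>G\<^esub>) I) \<subseteq> fst I"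
      unfolding image_sub_def using t1.fwd_ob Iin by auto
    show "snd (image_sub (T \<one>\<^bsub>G\<^esub>) I) \<subseteq> snd I"
      unfolding image_sub_def using t1.fwd_ar Iin by auto
  qed
  moreover have "fst I \<subseteq> fst K1"
  proof
    fix X assume "X \<in> fst I"
    then show "X \<in> fst K1" using t2.bwd_ob[of X] Iin K1p unfolding image_sub_def by auto
  qed
  moreover have "snd I \<subseteq> snd K1"
  proof
    fix f assume fI: "f \<in> snd I"
    have f1: "f \<in> Ar C" using Iin fI by blast
    have e: "snd (image_sub (T \<one>\<^bsub>G\<^esub>) I) = fa (T \<one>\<^bsub>G\<^esub>) ` snd I"
      by (simp add: image_sub_def)
    have "fa (T \<one>\<^bsub>G\<^esub>) f \<in> fa (T \<one>\<^bsub>G\<^esub>) ` snd I" using fI by (rule imageI)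
    then have f2: "fa (T \<one>\<^bsub>G\<^esub>) f \<in> snd K1" using K1p e by blast
    have "id f \<in> snd K1" using t2.bwd_ar[OF f1 f2] .
    then show "f \<in> snd K1" by (simp only: id_apply)
  qed
  ultimately have P1: "K1 = I" by (simp add: prod_eq_iff)
  have P2: "iso_closure C (image_sub (T g) (iso_closure C (image_sub (T h) I)))
           = iso_closure C (image_sub (T (g \<otimes>\<^bsub>G\<^esub> h)) I)"
    if g: "g \<in> carrier G" and h: "h \<in> carrier G" for g h
  proof -
    have gh: "g \<otimes>\<^bsub>G\<^esub> h \<in> carrier G" using mc g h .
    define J where "J = iso_closure C (image_sub (T h) I)"
    define L where "L = iso_closure C (image_sub (T g) J)"
    define M where "M = iso_closure C (image_sub (T (g \<otimes>\<^bsub>G\<^esub> h)) I)"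
    have Jp: "subcategory C J \<and> fst (image_sub (T h) I) \<subseteq> fst J \<and>
      snd (image_sub (T h) I) \<subseteq> snd J \<and> iso_closed C J"
      unfolding J_def using cl_prop[OF cat] image_in'[OF Tf[OF h] Isub] by blast
    have Lp: "subcategory C L \<and> fst (image_sub (T g) J) \<subseteq> fst L \<and>
      snd (image_sub (T g) J) \<subseteq> snd L \<and> iso_closed C L"
      unfolding L_def using cl_prop[OF cat] image_in'[OF Tf[OF g]] Jp by blast
    have Mp: "subcategory C M \<and> fst (image_sub (T (g \<otimes>\<^bsub>G\<^esub> h)) I) \<subseteq> fst M \<and>
      snd (image_sub (T (g \<otimes>\<^bsub>G\<^esub> h)) I) \<subseteq> snd M \<and> iso_closed C M"
      unfolding M_def using cl_prop[OF cat] image_in'[OF Tf[OF gh] Isub] by blast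
    note cf = comp_functor[OF cat Tf[OF g] Tf[OF h]]
    interpret tL: transfer_setup C L "fo (T g) \<circ> fo (T h)" "fa (T g) \<circ> fa (T h)"
       "fo (T (g \<otimes>\<^bsub>G\<^esub> h))" "fa (T (g \<otimes>\<^bsub>G\<^esub> h))" "\<gamma> g h"
      using cat Lp cf Tf[OF gh] Tg[OF g h] by unfold_locales auto
    interpret tM: transfer_setup C M "fo (T g) \<circ> fo (T h)" "fa (T g) \<circ> fa (T h)"
       "fo (T (g \<otimes>\<^bsub>G\<^esub> h))" "fa (T (g \<otimes>\<^bsub>G\<^esub> h))" "\<gamma> g h"
      using cat Mp cf Tf[OF gh] Tg[OF g h] by unfold_locales auto
    have MinL: "fst M \<subseteq> fst L \<and> snd M \<subseteq> snd L"
      unfolding M_def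
    proof (rule cl_min)
      show "subcategory C L" "iso_closed C L" using Lp by auto
      show "fst (image_sub (T (g \<otimes>\<^bsub>G\<^esub> h)) I) \<subseteq> fst L"
      proof
        fix Y assume "Y \<in> fst (image_sub (T (g \<otimes>\<^bsub>G\<^esub> h)) I)"
        then obtain X where X: "X \<in> fst I" "Y = fo (T (g \<otimes>\<^bsub>G\<^esub> h)) X" unfolding image_sub_def by auto
        have "fo (T h) X \<in> fst J" using X Jp unfolding image_sub_def by auto
        then have "fo (T g) (fo (T h) X) \<in> fst L" using Lp unfolding image_sub_def by auto
        then show "Y \<in> fst L" using tL.fwd_ob[of X] X Iin by auto
      qed
      show "snd (image_sub (T (g \<otimes>\<^bsub>G\<^esub> h)) I) \<subseteq> snd L"
      proof
        fix Y assume "Y \<in> snd (image_sub (T (g \<otimes>\<^bsub>G\<^esub> h)) I)"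
        then obtain X where X: "X \<in> snd I" "Y = fa (T (g \<otimes>\<^bsub>G\<^esub> h)) X" unfolding image_sub_def by auto
        have "fa (T h) X \<in> snd J" using X Jp unfolding image_sub_def by auto
        then have "fa (T g) (fa (T h) X) \<in> snd L" using Lp unfolding image_sub_def by auto
        then show "Y \<in> snd L" using tL.fwd_ar[of X] X Iin by auto
      qed
    qed
    define E where "E = ({X \<in> Ob C. fo (T g) X \<in> fst M}, {f \<in> Ar C. fa (T g) f \<in> snd M})"
    have Esub: "subcategory C E"
      unfolding subcategory_def E_def
    proof (intro conjI ballI impI)
      fix f assume "f \<in> snd ({X \<in> Ob C. fo (T g) X \<in> fst M}, {f \<in> Ar C. fa (T g) f \<in> snd M})"
      then have f: "f \<in> Ar C" "fa (T g) f \<in> snd M" by auto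
      have Msub: "subcategory C M" using Mp by blast
      have "dm C (fa (T g) f) \<in> fst M \<and> cd C (fa (T g) f) \<in> fst M" using sub_dm[OF Msub f(2)] .
      then show "dm C f \<in> fst ({X \<in> Ob C. fo (T g) X \<in> fst M}, {f \<in> Ar C. fa (T g) f \<in> snd M})"
        "cd C f \<in> fst ({X \<in> Ob C. fo (T g) X \<in> fst M}, {f \<in> Ar C. fa (T g) f \<in> snd M})"
        using fun_ar[OF Tf[OF g] f(1)] cat_dom[OF cat f(1)] by auto
    next
      fix X assume "X \<in> fst ({X \<in> Ob C. fo (T g) X \<in> fst M}, {f \<in> Ar C. fa (T g) f \<in> snd M})"
      then have X: "X \<in> Ob C" "fo (T g) X \<in> fst M" by auto
      have "idt C (fo (T g) X) \<in> snd M" using X(2) Mp unfolding subcategory_def by auto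
      then show "idt C X \<in> snd ({X \<in> Ob C. fo (T g) X \<in> fst M}, {f \<in> Ar C. fa (T g) f \<in> snd M})"
        using fun_id[OF Tf[OF g] X(1)] cat_id[OF cat X(1)] by auto
    next
      fix f k assume a: "f \<in> snd ({X \<in> Ob C. fo (T g) X \<in> fst M}, {f \<in> Ar C. fa (T g) f \<in> snd M})"
        "k \<in> snd ({X \<in> Ob C. fo (T g) X \<in> fst M}, {f \<in> Ar C. fa (T g) f \<in> snd M})"
        and e: "cd C f = dm C k"
      then have f: "f \<in> Ar C" "fa (T g) f \<in> snd M" "k \<in> Ar C" "fa (T g) k \<in> snd M" by auto
      have "cmp C (fa (T g) k) (fa (T g) f) \<in> snd M"
        using sub_comp[of C M] Mp f fun_ar[OF Tf[OF g] f(1)] fun_ar[OF Tf[OF g] f(3)] e by auto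
      then show "cmp C k f \<in> snd ({X \<in> Ob C. fo (T g) X \<in> fst M}, {f \<in> Ar C. fa (T g) f \<in> snd M})"
        using fun_comp[OF Tf[OF g] f(1) f(3) e] cat_comp[OF cat f(1) f(3) e] by auto
    qed (auto)
    have Eic: "iso_closed C E"
      unfolding iso_closed_def E_def
    proof (intro ballI allI impI)
      fix X \<phi> assume X: "X \<in> fst ({X \<in> Ob C. fo (T g) X \<in> fst M}, {f \<in> Ar C. fa (T g) f \<in> snd M})"
        and p: "iso C \<phi> \<and> dm C \<phi> = X"
      have pa: "\<phi> \<in> Ar C" using p by (simp add: iso_def)
      have "iso C (fa (T g) \<phi>)" using functor_iso[OF cat Tf[OF g]] p by blast
      moreover have "dm C (fa (T g) \<phi>) = fo (T g) X" using fun_ar[OF Tf[OF g] pa] p by simp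
      ultimately have "cd C (fa (T g) \<phi>) \<in> fst M \<and> fa (T g) \<phi> \<in> snd M"
        using isoc[of C M] Mp X by auto
      then show "cd C \<phi> \<in> fst ({X \<in> Ob C. fo (T g) X \<in> fst M}, {f \<in> Ar C. fa (T g) f \<in> snd M}) \<and>
          \<phi> \<in> snd ({X \<in> Ob C. fo (T g) X \<in> fst M}, {f \<in> Ar C. fa (T g) f \<in> snd M})"
        using fun_ar[OF Tf[OF g] pa] cat_dom[OF cat pa] pa by auto
    qed
    have JE: "fst J \<subseteq> fst E \<and> snd J \<subseteq> snd E"
      unfolding J_def
    proof (rule cl_min[OF Esub _ _ Eic])
      show "fst (image_sub (T h) I) \<subseteq> fst E"
      proof
        fix Y assume "Y \<in> fst (image_sub (T h) I)"
        then obtain X where X: "X \<in> fst I" "Y = fo (T h) X" unfolding image_sub_def by auto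
        have "fo (T (g \<otimes>\<^bsub>G\<^esub> h)) X \<in> fst M" using X Mp unfolding image_sub_def by auto
        then have "fo (T g) (fo (T h) X) \<in> fst M" using tM.bwd_ob[of X] X Iin by auto
        then show "Y \<in> fst E" unfolding E_def using X Iin fun_ob[OF Tf[OF h]] by auto
      qed
      show "snd (image_sub (T h) I) \<subseteq> snd E"
      proof
        fix Y assume "Y \<in> snd (image_sub (T h) I)"
        then obtain X where X: "X \<in> snd I" "Y = fa (T h) X" unfolding image_sub_def by auto
        have "fa (T (g \<otimes>\<^bsub>G\<^esub> h)) X \<in> snd M" using X Mp unfolding image_sub_def by auto
        then have "fa (T g) (fa (T h) X) \<in> snd M" using tM.bwd_ar[of X] X Iin by auto
        then show "Y \<in> snd E" unfolding E_def using X Iin fun_ar[OF Tf[OF h]] by auto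
      qed
    qed
    have LM: "fst L \<subseteq> fst M \<and> snd L \<subseteq> snd M"
      unfolding L_def
    proof (rule cl_min)
      show "subcategory C M" "iso_closed C M" using Mp by auto
      show "fst (image_sub (T g) J) \<subseteq> fst M" using JE unfolding E_def image_sub_def by auto
      show "snd (image_sub (T g) J) \<subseteq> snd M" using JE unfolding E_def image_sub_def by auto
    qed
    have "L = M" using LM MinL by (simp add: prod_eq_iff subset_antisym)
    then show ?thesis unfolding L_def J_def M_def .
  qed
  show ?thesis using P1 P2 unfolding K1_def by blast
qed

end
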